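(* Let $G$ be a simple directed graph and $\sigma$ a set of nodes with a simply-added split $\sigma=\tau\,\dot\cup\,\omega$ ($\omega$ simply-added onto $\tau$), where $\tau$ has uniform in-degree. If $\tau$ is not a stable motif, then $\sigma$ is not a stable motif (for a CTLN $W(G,\varepsilon,\delta)$ with legal parameters).
   Context: $\sigma=\tau\,\dot\cup\,\omega$ with $\tau,\omega$ nonempty and disjoint is a simply-added split ($\omega$ simply-added onto $\tau$) if for each $i\in\omega$, either $i\to j$ for every $j\in\tau$ or $i\to j$ for no $j\in\tau$ (no constraints on other edges). $\tau$ has uniform in-degree if all nodes of $G|_\tau$ have the same in-degree. Legal parameters: $\delta>0$, $0<\varepsilon<\frac{\delta}{\delta+1}$. $W$ has $W_{ii}=0$, $W_{ij}=-1+\varepsilon$ if $j\to i$, $W_{ij}=-1-\delta$ if $i\ne j$, $j\not\to i$; dynamics $\dot x_i=-x_i+[\sum_jW_{ij}x_j+\theta]_+$, $\theta>0$; nondegenerate. $W_\rho$ is the principal submatrix on $\rho$. $\rho$ is a stable motif if $\theta(I-W_\rho)^{-1}1_\rho$ has all entries positive and all eigenvalues of $I-W_\rho$ have positive real part. *)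

theory Defs
  imports "Jordan_Normal_Form.DL_Submatrix" "Jordan_Normal_Form.Char_Poly" "Jordan_Normal_Form.Determinant"
begin

text \<open>Graphs on the vertex set {0..<n}; E i j means the edge i -> j.\<close>

definition simple_digraph :: "nat \<Rightarrow> (nat \<Rightarrow> nat \<Rightarrow> bool) \<Rightarrow> bool" where
  "simple_digraph n E \<longleftrightarrow> (\<forall>i. \<not> E i i) \<and> (\<forall>i j. E i j \<longrightarrow> i < n \<and> j < n)"

definition legal_params :: "real \<Rightarrow> real \<Rightarrow> bool" where
  "legal_params \<epsilon> \<delta> \<longleftrightarrow> \<delta> > 0 \<and> 0 < \<epsilon> \<and> \<epsilon> < \<delta> / (\<delta> + 1)"

definition ctln_W :: "nat \<Rightarrow> (nat \<Rightarrow> nat \<Rightarrow> bool) \<Rightarrow> real \<Rightarrow> real \<Rightarrow> real mat" where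
  "ctln_W n E \<epsilon> \<delta> = mat n n (\<lambda>(i,j). if i = j then 0 else if E j i then -1 + \<epsilon> else -1 - \<delta>)"

text \<open>Principal submatrix W_rho (rows/columns indexed by rho in increasing order).\<close>
definition principal_sub :: "real mat \<Rightarrow> nat set \<Rightarrow> real mat" where
  "principal_sub W \<rho> = submatrix W \<rho> \<rho>"

definition I_minus_W :: "real mat \<Rightarrow> nat set \<Rightarrow> real mat" where
  "I_minus_W W \<rho> = 1\<^sub>m (dim_row (principal_sub W \<rho>)) - principal_sub W \<rho>"

definition mat_inv :: "real mat \<Rightarrow> real mat" where
  "mat_inv M = (SOME B. B \<in> carrier_mat (dim_row M) (dim_row M) \<and> inverts_mat M B \<and> inverts_mat B M)"

definition fp_vec :: "real mat \<Rightarrow> real \<Rightarrow> nat set \<Rightarrow> real vec" where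
  "fp_vec W \<theta> \<rho> = \<theta> \<cdot>\<^sub>v (mat_inv (I_minus_W W \<rho>) *\<^sub>v vec (dim_row (I_minus_W W \<rho>)) (\<lambda>_. 1))"

definition stable_motif :: "real mat \<Rightarrow> real \<Rightarrow> nat set \<Rightarrow> bool" where
  "stable_motif W \<theta> \<rho> \<longleftrightarrow>
     invertible_mat (I_minus_W W \<rho>) \<and>
     (\<forall>i < dim_vec (fp_vec W \<theta> \<rho>). fp_vec W \<theta> \<rho> $ i > 0) \<and>
     (\<forall>z. eigenvalue (map_mat complex_of_real (I_minus_W W \<rho>)) z \<longrightarrow> Re z > 0)"

definition fp_full :: "real mat \<Rightarrow> real \<Rightarrow> nat set \<Rightarrow> nat \<Rightarrow> real" where
  "fp_full W \<theta> \<sigma> j = (if j \<in> \<sigma> then fp_vec W \<theta> \<sigma> $ card {a \<in> \<sigma>. a < j} else 0)"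

definition s_val :: "real mat \<Rightarrow> real \<Rightarrow> nat set \<Rightarrow> nat \<Rightarrow> real" where
  "s_val W \<theta> \<sigma> k = (\<Sum>j\<in>\<sigma>. W $$ (k, j) * fp_full W \<theta> \<sigma> j) + \<theta>"

definition fp_support :: "nat \<Rightarrow> real mat \<Rightarrow> real \<Rightarrow> nat set \<Rightarrow> bool" where
  "fp_support n W \<theta> \<sigma> \<longleftrightarrow> \<sigma> \<noteq> {} \<and> \<sigma> \<subseteq> {0..<n} \<and> invertible_mat (I_minus_W W \<sigma>) \<and>
     (\<forall>j\<in>\<sigma>. fp_full W \<theta> \<sigma> j > 0) \<and> (\<forall>k\<in>{0..<n} - \<sigma>. s_val W \<theta> \<sigma> k \<le> 0)"

definition nondegenerate :: "nat \<Rightarrow> real mat \<Rightarrow> real \<Rightarrow> bool" where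
  "nondegenerate n W \<theta> \<longleftrightarrow>
     (\<forall>\<sigma>. \<sigma> \<subseteq> {0..<n} \<and> \<sigma> \<noteq> {} \<longrightarrow> det (I_minus_W W \<sigma>) \<noteq> 0) \<and>
     (\<forall>\<sigma>. fp_support n W \<theta> \<sigma> \<longrightarrow> (\<forall>k\<in>{0..<n} - \<sigma>. s_val W \<theta> \<sigma> k \<noteq> 0))"

definition simply_added :: "(nat \<Rightarrow> nat \<Rightarrow> bool) \<Rightarrow> nat set \<Rightarrow> nat set \<Rightarrow> bool" where
  "simply_added E \<omega> \<tau> \<longleftrightarrow> (\<forall>i\<in>\<omega>. (\<forall>j\<in>\<tau>. E i j) \<or> (\<forall>j\<in>\<tau>. \<not> E i j))"

definition uniform_in_degree :: "(nat \<Rightarrow> nat \<Rightarrow> bool) \<Rightarrow> nat set \<Rightarrow> bool" where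
  "uniform_in_degree E \<tau> \<longleftrightarrow> (\<exists>d. \<forall>i\<in>\<tau>. card {j\<in>\<tau>. E j i} = d)"

end

theory Submission
  imports Defs
begin

lemma pick_bij:
  assumes "finite S"
  shows "bij_betw (pick S) {0..<card S} S"
proof (rule bij_betw_imageI)
  show "inj_on (pick S) {0..<card S}"
    unfolding inj_on_def by (metis atLeastLessThan_iff nat_neq_iff pick_mono)
  show "pick S ` {0..<card S} = S"
  proof
    show "pick S ` {0..<card S} \<subseteq> S" using pick_in_set by auto
    show "S \<subseteq> pick S ` {0..<card S}"
    proof
      fix a assume a: "a \<in> S"
      have "{x\<in>S. x<a} \<subset> S" using a by auto
      then have "card {x\<in>S. x<a} < card S" using assms by (simp add: psubset_card_mono)
      then show "a \<in> pick S ` {0..<card S}" using pick_card_in_set[OF a] by force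
    qed
  qed
qed

definition Nd :: "(nat \<Rightarrow> nat \<Rightarrow> bool) \<Rightarrow> real \<Rightarrow> real \<Rightarrow> nat \<Rightarrow> nat \<Rightarrow> real" where
  "Nd E \<epsilon> \<delta> a b = (if a = b then 1 else if E b a then 1 - \<epsilon> else 1 + \<delta>)"

lemma set_lt: "\<rho> \<subseteq> {0..<n} \<Longrightarrow> {i. i < n \<and> i \<in> \<rho>} = \<rho>" by auto

lemma IW_carrier:
  assumes "\<rho> \<subseteq> {0..<n}"
  shows "I_minus_W (ctln_W n E \<epsilon> \<delta>) \<rho> \<in> carrier_mat (card \<rho>) (card \<rho>)"
proof -
  have "principal_sub (ctln_W n E \<epsilon> \<delta>) \<rho> \<in> carrier_mat (card \<rho>) (card \<rho>)"
    unfolding principal_sub_def carrier_mat_def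
    using set_lt[OF assms] by (simp add: dim_submatrix ctln_W_def)
  then show ?thesis unfolding I_minus_W_def by auto
qed

lemma IW_entry:
  assumes "\<rho> \<subseteq> {0..<n}" "p < card \<rho>" "q < card \<rho>"
  shows "I_minus_W (ctln_W n E \<epsilon> \<delta>) \<rho> $$ (p,q) = Nd E \<epsilon> \<delta> (pick \<rho> p) (pick \<rho> q)"
proof -
  have fin: "finite \<rho>" using assms(1) finite_subset by blast
  have pp: "pick \<rho> p \<in> \<rho>" "pick \<rho> q \<in> \<rho>" using pick_in_set assms by auto
  have pl: "pick \<rho> p < n" "pick \<rho> q < n" using pp assms(1) by auto
  have eq: "pick \<rho> p = pick \<rho> q \<longleftrightarrow> p = q"
    by (metis assms(2,3) nat_neq_iff pick_mono)
  have c: "card {i. i < dim_row (ctln_W n E \<epsilon> \<delta>) \<and> i \<in> \<rho>} = card \<rho>"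
          "card {i. i < dim_col (ctln_W n E \<epsilon> \<delta>) \<and> i \<in> \<rho>} = card \<rho>"
    using set_lt[OF assms(1)] by (simp_all add: ctln_W_def)
  show ?thesis
    unfolding I_minus_W_def principal_sub_def
    using assms pp eq c pl
    by (auto simp: dim_submatrix submatrix_index ctln_W_def Nd_def)
qed

lemma eig_transpose:
  assumes "(A :: complex mat) \<in> carrier_mat k k"
  shows "eigenvalue A z \<longleftrightarrow> eigenvalue (transpose_mat A) z"
  using eigenvalue_root_char_poly[OF assms] eigenvalue_root_char_poly[of "transpose_mat A" k]
    char_poly_transpose_mat[OF assms] assms by auto

lemma tmv_entry:
  assumes "\<rho> \<subseteq> {0..<n}" "v \<in> carrier_vec (card \<rho>)" "q < card \<rho>"
  shows "(transpose_mat (map_mat complex_of_real (I_minus_W (ctln_W n E \<epsilon> \<delta>) \<rho>)) *\<^sub>v v) $ q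
     = (\<Sum>p\<in>{0..<card \<rho>}. v $ p * of_real (Nd E \<epsilon> \<delta> (pick \<rho> p) (pick \<rho> q)))"
proof -
  have C: "I_minus_W (ctln_W n E \<epsilon> \<delta>) \<rho> \<in> carrier_mat (card \<rho>) (card \<rho>)"
    using IW_carrier[OF assms(1)] .
  show ?thesis
    using C assms
    by (auto simp: mult_mat_vec_def scalar_prod_def IW_entry mult.commute intro!: sum.cong)
qed

lemma eig_iff:
  assumes "\<rho> \<subseteq> {0..<n}"
  shows "eigenvalue (map_mat complex_of_real (I_minus_W (ctln_W n E \<epsilon> \<delta>) \<rho>)) z \<longleftrightarrow>
    (\<exists>f. (\<exists>a\<in>\<rho>. f a \<noteq> 0) \<and> (\<forall>b\<in>\<rho>. (\<Sum>a\<in>\<rho>. f a * of_real (Nd E \<epsilon> \<delta> a b)) = z * f b))"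
    (is "?L \<longleftrightarrow> ?R")
proof -
  define k where "k = card \<rho>"
  have fin: "finite \<rho>" using assms finite_subset by blast
  have bij: "bij_betw (pick \<rho>) {0..<k} \<rho>" using pick_bij[OF fin] k_def by simp
  have C: "map_mat complex_of_real (I_minus_W (ctln_W n E \<epsilon> \<delta>) \<rho>) \<in> carrier_mat k k"
    using IW_carrier[OF assms] k_def by auto
  have CT: "transpose_mat (map_mat complex_of_real (I_minus_W (ctln_W n E \<epsilon> \<delta>) \<rho>)) \<in> carrier_mat k k"
    using C by auto
  have reidx: "(\<Sum>p\<in>{0..<k}. h (pick \<rho> p)) = (\<Sum>a\<in>\<rho>. h a)" for h :: "nat \<Rightarrow> complex"
    using sum.reindex_bij_betw[OF bij] .
  have idx: "card {x\<in>\<rho>. x < a} < k" "pick \<rho> (card {x\<in>\<rho>. x < a}) = a" if "a \<in> \<rho>" for a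
  proof -
    have "{x\<in>\<rho>. x<a} \<subset> \<rho>" using that by auto
    then show "card {x\<in>\<rho>. x < a} < k" using fin k_def by (simp add: psubset_card_mono)
    show "pick \<rho> (card {x\<in>\<rho>. x < a}) = a" using pick_card_in_set[OF that] .
  qed
  have cp: "card {x\<in>\<rho>. x < pick \<rho> p} = p" if "p < k" for p
    using card_pick that k_def by auto
  have pin: "pick \<rho> p \<in> \<rho>" if "p < k" for p using pick_in_set that k_def by auto
  show ?thesis
  proof
    assume ?L
    then have "eigenvalue (transpose_mat (map_mat complex_of_real (I_minus_W (ctln_W n E \<epsilon> \<delta>) \<rho>))) z"
      using eig_transpose[OF C] by simp
    then obtain v where v: "v \<in> carrier_vec k" "v \<noteq> 0\<^sub>v k"
      "transpose_mat (map_mat complex_of_real (I_minus_W (ctln_W n E \<epsilon> \<delta>) \<rho>)) *\<^sub>v v = z \<cdot>\<^sub>v v"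
      unfolding eigenvalue_def eigenvector_def using CT by auto
    define f where "f a = v $ card {x\<in>\<rho>. x < a}" for a
    have fv: "f (pick \<rho> p) = v $ p" if "p < k" for p using cp[OF that] f_def by simp
    show ?R
    proof (intro exI conjI ballI)
      obtain p where p: "p < k" "v $ p \<noteq> 0" using v(1,2) by (metis carrier_vecD eq_vecI index_zero_vec(1,2))
      then show "\<exists>a\<in>\<rho>. f a \<noteq> 0" using fv pin by metis
    next
      fix b assume b: "b \<in> \<rho>"
      define q where "q = card {x\<in>\<rho>. x < b}"
      have q: "q < k" "pick \<rho> q = b" using idx[OF b] q_def by auto
      have "(\<Sum>a\<in>\<rho>. f a * of_real (Nd E \<epsilon> \<delta> a b)) = (\<Sum>p\<in>{0..<k}. f (pick \<rho> p) * of_real (Nd E \<epsilon> \<delta> (pick \<rho> p) b))"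
        using reidx[of "\<lambda>a. f a * of_real (Nd E \<epsilon> \<delta> a b)"] by simp
      also have "\<dots> = (\<Sum>p\<in>{0..<k}. v $ p * of_real (Nd E \<epsilon> \<delta> (pick \<rho> p) (pick \<rho> q)))"
        using fv q by (intro sum.cong) auto
      also have "\<dots> = (transpose_mat (map_mat complex_of_real (I_minus_W (ctln_W n E \<epsilon> \<delta>) \<rho>)) *\<^sub>v v) $ q"
        using tmv_entry[OF assms, of v q] v(1) q k_def by simp
      also have "\<dots> = z * v $ q" using v(3) v(1) q by simp
      also have "\<dots> = z * f b" using f_def q_def by simp
      finally show "(\<Sum>a\<in>\<rho>. f a * of_real (Nd E \<epsilon> \<delta> a b)) = z * f b" .
    qed
  next
    assume ?R
    then obtain f where f: "\<exists>a\<in>\<rho>. f a \<noteq> 0"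
      "\<forall>b\<in>\<rho>. (\<Sum>a\<in>\<rho>. f a * of_real (Nd E \<epsilon> \<delta> a b)) = z * f b" by blast
    define v where "v = vec k (\<lambda>p. f (pick \<rho> p))"
    have vc: "v \<in> carrier_vec k" unfolding v_def by simp
    have vnz: "v \<noteq> 0\<^sub>v k"
    proof
      assume "v = 0\<^sub>v k"
      obtain a where a: "a \<in> \<rho>" "f a \<noteq> 0" using f(1) by blast
      have "v $ card {x\<in>\<rho>. x < a} = f a" using idx[OF a(1)] v_def by simp
      then show False using \<open>v = 0\<^sub>v k\<close> idx[OF a(1)] a(2) by simp
    qed
    have "transpose_mat (map_mat complex_of_real (I_minus_W (ctln_W n E \<epsilon> \<delta>) \<rho>)) *\<^sub>v v = z \<cdot>\<^sub>v v"
    proof (rule eq_vecI)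
      show "dim_vec (transpose_mat (map_mat complex_of_real (I_minus_W (ctln_W n E \<epsilon> \<delta>) \<rho>)) *\<^sub>v v) = dim_vec (z \<cdot>\<^sub>v v)"
        using CT vc by simp
      fix q assume "q < dim_vec (z \<cdot>\<^sub>v v)"
      then have q: "q < k" using vc by simp
      have "(transpose_mat (map_mat complex_of_real (I_minus_W (ctln_W n E \<epsilon> \<delta>) \<rho>)) *\<^sub>v v) $ q
          = (\<Sum>p\<in>{0..<k}. v $ p * of_real (Nd E \<epsilon> \<delta> (pick \<rho> p) (pick \<rho> q)))"
        using tmv_entry[OF assms, of v q] vc q k_def by simp
      also have "\<dots> = (\<Sum>p\<in>{0..<k}. f (pick \<rho> p) * of_real (Nd E \<epsilon> \<delta> (pick \<rho> p) (pick \<rho> q)))"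
        unfolding v_def by (intro sum.cong) auto
      also have "\<dots> = (\<Sum>a\<in>\<rho>. f a * of_real (Nd E \<epsilon> \<delta> a (pick \<rho> q)))"
        using reidx[of "\<lambda>a. f a * of_real (Nd E \<epsilon> \<delta> a (pick \<rho> q))"] by simp
      also have "\<dots> = z * f (pick \<rho> q)" using f(2) pin[OF q] by simp
      also have "\<dots> = (z \<cdot>\<^sub>v v) $ q" using q v_def by simp
      finally show "(transpose_mat (map_mat complex_of_real (I_minus_W (ctln_W n E \<epsilon> \<delta>) \<rho>)) *\<^sub>v v) $ q = (z \<cdot>\<^sub>v v) $ q" .
    qed
    then have "eigenvalue (transpose_mat (map_mat complex_of_real (I_minus_W (ctln_W n E \<epsilon> \<delta>) \<rho>))) z"
      unfolding eigenvalue_def eigenvector_def using CT vc vnz by auto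
    then show ?L using eig_transpose[OF C] by simp
  qed
qed

lemma row_sum:
  assumes "\<not> E a a" "a \<in> \<tau>" "finite \<tau>" "card {j\<in>\<tau>. E j a} = d"
  shows "(\<Sum>b\<in>\<tau>. Nd E \<epsilon> \<delta> a b) = 1 + (1+\<delta>)*(real (card \<tau>) - 1) - (\<epsilon>+\<delta>)*real d"
proof -
  have "(\<Sum>b\<in>\<tau>. Nd E \<epsilon> \<delta> a b) = Nd E \<epsilon> \<delta> a a + (\<Sum>b\<in>\<tau>-{a}. Nd E \<epsilon> \<delta> a b)"
    using assms by (simp add: sum.remove)
  also have "(\<Sum>b\<in>\<tau>-{a}. Nd E \<epsilon> \<delta> a b) = (\<Sum>b\<in>\<tau>-{a}. (1+\<delta>) - (if E b a then \<epsilon>+\<delta> else 0))"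
    by (intro sum.cong) (auto simp: Nd_def)
  also have "\<dots> = (1+\<delta>) * real (card (\<tau>-{a})) - (\<Sum>b\<in>\<tau>-{a}. (if E b a then \<epsilon>+\<delta> else 0))"
    by (simp add: sum_subtractf)
  also have "(\<Sum>b\<in>\<tau>-{a}. (if E b a then \<epsilon>+\<delta> else 0)) = (\<Sum>b\<in>{b\<in>\<tau>-{a}. E b a}. \<epsilon>+\<delta>)"
    using assms(3) by (subst sum.inter_filter) auto
  also have "{b\<in>\<tau>-{a}. E b a} = {j\<in>\<tau>. E j a}" using assms(1) by auto
  moreover have "card \<tau> \<ge> 1" using assms(2,3) by (metis One_nat_def Suc_leI card_gt_0_iff empty_iff)
  ultimately show ?thesis using assms by (simp add: Nd_def of_nat_diff)
qed

theorem corollary1: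
  fixes n :: nat and E :: "nat \<Rightarrow> nat \<Rightarrow> bool" and \<epsilon> \<delta> \<theta> :: real
    and \<tau> \<omega> :: "nat set"
  assumes "simple_digraph n E"
    and "legal_params \<epsilon> \<delta>" and "\<theta> > 0"
    and "nondegenerate n (ctln_W n E \<epsilon> \<delta>) \<theta>"
    and "\<tau> \<subseteq> {0..<n}" and "\<omega> \<subseteq> {0..<n}"
    and "\<tau> \<noteq> {}" and "\<omega> \<noteq> {}" and "\<tau> \<inter> \<omega> = {}"
    and "simply_added E \<omega> \<tau>"
    and "uniform_in_degree E \<tau>"
    and "\<not> stable_motif (ctln_W n E \<epsilon> \<delta>) \<theta> \<tau>"
  shows "\<not> stable_motif (ctln_W n E \<epsilon> \<delta>) \<theta> (\<tau> \<union> \<omega>)"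
proof -
  define W where "W = ctln_W n E \<epsilon> \<delta>"
  define A where "A = I_minus_W W \<tau>"
  define k where "k = card \<tau>"
  have fin: "finite \<tau>" using assms(5) finite_subset by blast
  have k1: "k \<ge> 1" using fin assms(7) k_def by (metis One_nat_def Suc_leI card_gt_0_iff)
  have noloop: "\<not> E a a" for a using assms(1) unfolding simple_digraph_def by blast
  have eps0: "0 < \<epsilon>" "0 < \<delta>" "\<epsilon> < \<delta>/(\<delta>+1)" using assms(2) unfolding legal_params_def by auto
  have "\<delta>/(\<delta>+1) < 1" using eps0 by simp
  then have eps: "\<epsilon> < 1" "0 < \<epsilon>" "0 < \<delta>" using eps0 by linarith+
  obtain d where d: "\<forall>i\<in>\<tau>. card {j\<in>\<tau>. E j i} = d" using assms(11) unfolding uniform_in_degree_def by blast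
  define c where "c = 1 + (1+\<delta>)*(real k - 1) - (\<epsilon>+\<delta>)*real d"
  obtain a0 where a0: "a0 \<in> \<tau>" using assms(7) by blast
  have "{j\<in>\<tau>. E j a0} \<subseteq> \<tau> - {a0}" using noloop by auto
  then have "d \<le> k - 1" using d a0 fin k_def
    by (metis card_Diff_singleton card_mono finite_Diff)
  then have "real d \<le> real k - 1" using k1 by linarith
  then have cpos: "c > 0"
  proof -
    have "(\<epsilon>+\<delta>)*real d \<le> (\<epsilon>+\<delta>)*(real k - 1)"
      using \<open>real d \<le> real k - 1\<close> eps by (intro mult_left_mono) auto
    moreover have "(1 - \<epsilon>) * (real k - 1) \<ge> 0" using eps k1 by auto
    ultimately show ?thesis unfolding c_def by (auto simp: algebra_simps)
  qed
  have rows: "(\<Sum>b\<in>\<tau>. Nd E \<epsilon> \<delta> a b) = c" if "a \<in> \<tau>" for a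
    using row_sum[of E a \<tau> d \<epsilon> \<delta>] noloop[of a] fin d that unfolding c_def k_def by auto
  have AC: "A \<in> carrier_mat k k" using IW_carrier[OF assms(5)] A_def W_def k_def by simp
  have detA: "det A \<noteq> 0" using assms(4,5,7) unfolding nondegenerate_def A_def W_def by blast
  from det_non_zero_imp_unit[OF AC detA, of "()"]
  obtain B where B: "B \<in> carrier_mat k k" "B * A = 1\<^sub>m k" "A * B = 1\<^sub>m k"
    unfolding Units_def ring_mat_def by auto
  have invA: "invertible_mat A"
    unfolding invertible_mat_def inverts_mat_def using B AC by (auto intro!: exI[of _ B])
  define one where "one = vec k (\<lambda>_. 1::real)"
  have Aone: "A *\<^sub>v one = c \<cdot>\<^sub>v one"
  proof (rule eq_vecI)
    show "dim_vec (A *\<^sub>v one) = dim_vec (c \<cdot>\<^sub>v one)" using AC one_def by simp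
    fix p assume "p < dim_vec (c \<cdot>\<^sub>v one)"
    then have p: "p < k" using one_def by simp
    have bij: "bij_betw (pick \<tau>) {0..<k} \<tau>" using pick_bij[OF fin] k_def by simp
    have "(A *\<^sub>v one) $ p = (\<Sum>q\<in>{0..<k}. A $$ (p,q))"
      using AC p one_def by (simp add: mult_mat_vec_def scalar_prod_def)
    also have "\<dots> = (\<Sum>q\<in>{0..<k}. Nd E \<epsilon> \<delta> (pick \<tau> p) (pick \<tau> q))"
      using IW_entry[OF assms(5)] p k_def A_def W_def by (intro sum.cong) auto
    also have "\<dots> = (\<Sum>b\<in>\<tau>. Nd E \<epsilon> \<delta> (pick \<tau> p) b)"
      using sum.reindex_bij_betw[OF bij, of "Nd E \<epsilon> \<delta> (pick \<tau> p)"] by simp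
    also have "\<dots> = c" using rows pick_in_set p k_def by auto
    finally show "(A *\<^sub>v one) $ p = (c \<cdot>\<^sub>v one) $ p" using p one_def by simp
  qed
  have pos: "\<forall>i < dim_vec (fp_vec W \<theta> \<tau>). fp_vec W \<theta> \<tau> $ i > 0"
  proof -
    define B' where "B' = mat_inv A"
    have ex: "\<exists>X. X \<in> carrier_mat (dim_row A) (dim_row A) \<and> inverts_mat A X \<and> inverts_mat X A"
      using B AC unfolding inverts_mat_def by auto
    have B': "B' \<in> carrier_mat k k" "B' * A = 1\<^sub>m k"
      using someI_ex[OF ex] AC unfolding B'_def mat_inv_def inverts_mat_def by auto
    have oc: "one \<in> carrier_vec k" using one_def by simp
    have "one = (B' * A) *\<^sub>v one" using B' oc by simp
    also have "\<dots> = B' *\<^sub>v (A *\<^sub>v one)" by (rule assoc_mult_mat_vec[OF B'(1) AC oc])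
    also have "\<dots> = c \<cdot>\<^sub>v (B' *\<^sub>v one)" using Aone B' oc by (simp add: mult_mat_vec)
    finally have "one = c \<cdot>\<^sub>v (B' *\<^sub>v one)" .
    then have Bone: "B' *\<^sub>v one = (1/c) \<cdot>\<^sub>v one" using cpos
      by (metis (no_types, lifting) divide_self_if less_irrefl smult_smult_assoc one_smult_vec times_divide_eq_left mult.commute)
    have fpe: "fp_vec W \<theta> \<tau> = \<theta> \<cdot>\<^sub>v (B' *\<^sub>v one)"
      unfolding fp_vec_def B'_def A_def[symmetric] one_def using AC by simp
    show ?thesis unfolding fpe Bone using assms(3) cpos one_def by simp
  qed
  from assms(12) invA pos obtain z where z: "eigenvalue (map_mat complex_of_real A) z" "Re z \<le> 0"
    unfolding stable_motif_def A_def W_def by (auto simp: not_less)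
  from z(1) obtain f where f: "\<exists>a\<in>\<tau>. f a \<noteq> 0"
      "\<forall>b\<in>\<tau>. (\<Sum>a\<in>\<tau>. f a * of_real (Nd E \<epsilon> \<delta> a b)) = z * f b"
    using eig_iff[OF assms(5)] A_def W_def by blast
  define S where "S = (\<Sum>a\<in>\<tau>. f a)"
  have e1: "(\<Sum>b\<in>\<tau>. \<Sum>a\<in>\<tau>. f a * of_real (Nd E \<epsilon> \<delta> a b)) = z * S"
    using f(2) unfolding S_def by (simp add: sum_distrib_left)
  have e2: "(\<Sum>b\<in>\<tau>. \<Sum>a\<in>\<tau>. f a * of_real (Nd E \<epsilon> \<delta> a b)) = (\<Sum>a\<in>\<tau>. f a * of_real (\<Sum>b\<in>\<tau>. Nd E \<epsilon> \<delta> a b))"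
    by (subst sum.swap) (simp add: sum_distrib_left)
  have e3: "(\<Sum>a\<in>\<tau>. f a * of_real (\<Sum>b\<in>\<tau>. Nd E \<epsilon> \<delta> a b)) = of_real c * S"
    unfolding S_def sum_distrib_left using rows by (intro sum.cong) (auto simp: mult.commute)
  have "of_real c * S = z * S" using e1 e2 e3 by metis
  then have "(of_real c - z) * S = 0" by (simp add: left_diff_distrib)
  moreover have "of_real c \<noteq> z" using cpos z(2) by auto
  ultimately have S0: "S = 0" by simp
  define g where "g a = (if a \<in> \<tau> then f a else 0)" for a
  have sub: "\<tau> \<union> \<omega> \<subseteq> {0..<n}" using assms(5,6) by auto
  have gsum: "(\<Sum>a\<in>\<tau> \<union> \<omega>. g a * of_real (Nd E \<epsilon> \<delta> a b)) = (\<Sum>a\<in>\<tau>. f a * of_real (Nd E \<epsilon> \<delta> a b))" for b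
  proof -
    have fo: "finite \<omega>" using assms(6) finite_subset by blast
    have "(\<Sum>a\<in>\<tau> \<union> \<omega>. g a * of_real (Nd E \<epsilon> \<delta> a b)) = (\<Sum>a\<in>\<tau>. g a * of_real (Nd E \<epsilon> \<delta> a b)) + (\<Sum>a\<in>\<omega>. g a * of_real (Nd E \<epsilon> \<delta> a b))"
      using sum.union_disjoint[OF fin fo assms(9)] by simp
    also have "(\<Sum>a\<in>\<omega>. g a * of_real (Nd E \<epsilon> \<delta> a b)) = 0"
      using assms(9) unfolding g_def by (intro sum.neutral) auto
    finally show ?thesis unfolding g_def by simp
  qed
  have "eigenvalue (map_mat complex_of_real (I_minus_W W (\<tau> \<union> \<omega>))) z"
    unfolding W_def eig_iff[OF sub]
  proof (intro exI conjI ballI)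
    show "\<exists>a\<in>\<tau> \<union> \<omega>. g a \<noteq> 0" using f(1) g_def by auto
  next
    fix b assume b: "b \<in> \<tau> \<union> \<omega>"
    show "(\<Sum>a\<in>\<tau> \<union> \<omega>. g a * of_real (Nd E \<epsilon> \<delta> a b)) = z * g b"
    proof (cases "b \<in> \<tau>")
      case True
      then show ?thesis using gsum f(2) g_def by simp
    next
      case False
      then have bo: "b \<in> \<omega>" using b by auto
      have gb: "g b = 0" using False g_def by simp
      have ne: "a \<noteq> b" if "a \<in> \<tau>" for a using that False by auto
      from assms(10) bo have "(\<forall>j\<in>\<tau>. E b j) \<or> (\<forall>j\<in>\<tau>. \<not> E b j)" unfolding simply_added_def by blast
      then obtain r where r: "\<forall>a\<in>\<tau>. Nd E \<epsilon> \<delta> a b = r"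
        using ne unfolding Nd_def by (metis)
      have "(\<Sum>a\<in>\<tau>. f a * of_real (Nd E \<epsilon> \<delta> a b)) = (\<Sum>a\<in>\<tau>. f a * of_real r)"
        using r by simp
      also have "\<dots> = S * of_real r" unfolding S_def by (simp add: sum_distrib_right)
      finally show ?thesis using gsum S0 gb by simp
    qed
  qed
  then show ?thesis using z(2) unfolding stable_motif_def W_def by (auto simp: not_less)
qed

end
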